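(* There is an absolute constant $c>0$ such that the following holds. Let $r,r'>1$ be conjugate indices ($1/r+1/r'=1$), let $z\in\mathbb R^N$, and let $V\subset\mathbb R^N$ satisfy Structural Assumption A with $p=r'$ (for some integer $s_0\ge0$, admissible sequence $(V_s)$ with maps $\pi_s$, seminorms $\|\cdot\|_{[s]}$, $\|\cdot\|$, and integers $(j_s)_{s\ge s_0}$). Let $\varepsilon_1,\dots,\varepsilon_N$ be independent symmetric $\{-1,1\}$-valued random variables. Then for every $t\ge4$, with probability at least $1-2\exp(-ct^22^{s_0})$, for every $v\in V$, $$\left|\sum_{i=1}^N\varepsilon_iz_iv_i\right|\le2\|z\|_{\ell_2^N}\Lambda(V)+t\,\Theta(V)\,N^{1/2r'}\Big(\sum_{i\ge j_{s_0}}(z_i^* )^{2r}\Big)^{1/2r}.$$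
   Context: For $x\in\mathbb R^N$, $(x_i^* )_{i=1}^N$ is the nonincreasing rearrangement of $(|x_i|)_{i=1}^N$; empty sums are $0$. An admissible sequence of $V$ is a sequence of subsets $(V_s)_{s\ge0}$ with $|V_0|=1$, $|V_s|\le2^{2^s}$. Structural Assumption A (parameter $p\ge1$): $s_0\ge0$ is an integer, $(V_s)_{s\ge0}$ an admissible sequence of $V$, $\pi_s:V\to V_s$ maps, $\Delta_sv=\pi_{s+1}v-\pi_sv$, and for every $v\in V$, $v=\pi_{s_0}v+\sum_{s\ge s_0}\Delta_sv$ (convergent series). $(\|\cdot\|_{[s]})_{s\ge s_0}$ is a family of seminorms on $\mathbb R^N$ and $\|\cdot\|$ another seminorm on $\mathbb R^N$. $(j_s)_{s\ge s_0}$ is a nondecreasing sequence of integers with $1\le j_s\le N+1$. For every $s\ge s_0$ and $v\in V$: $\big(\sum_{i<j_s}((\Delta_sv)_i^* )^2\big)^{1/2}\le\|\Delta_sv\|_{[s]}$, $\big(\sum_{i\ge j_s}((\Delta_sv)_i^* )^{2p}\big)^{1/2p}\le\|\Delta_sv\|N^{1/2p}$, $\big(\sum_{i<j_s}((\pi_sv)_i^* )^2\big)^{1/2}\le\|\pi_sv\|_{[s]}$, $\big(\sum_{i\ge j_s}((\pi_sv)_i^* )^{2p}\big)^{1/2p}\le\|\pi_sv\|N^{1/2p}$. Set $\Lambda(V)=\sup_{v\in V}\big(\sum_{s\ge s_0}\|\Delta_sv\|_{[s]}+\|\pi_{s_0}v\|_{[s_0]}\big)$ and $\Theta(V)=\sup_{v\in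 V}\big(\sum_{s\ge s_0}2^{s/2}\|\Delta_sv\|+2^{s_0/2}\|\pi_{s_0}v\|\big)$. *)

theory Defs
  imports "HOL-Probability.Probability"
begin

text \<open>Vectors of R^N are represented as functions nat => real supported on {1..N}.\<close>

definition RN :: "nat \<Rightarrow> (nat \<Rightarrow> real) set" where
  "RN N = {x. \<forall>i. i \<notin> {1..N} \<longrightarrow> x i = 0}"

text \<open>Nonincreasing rearrangement of (|x_i|)_{i=1}^N, 1-indexed: xstar N x i for 1 <= i <= N.\<close>
definition xstar :: "nat \<Rightarrow> (nat \<Rightarrow> real) \<Rightarrow> nat \<Rightarrow> real" where
  "xstar N x i = rev (sort (map (\<lambda>k. \<bar>x k\<bar>) [1..<N+1])) ! (i - 1)"

definition head_l2 :: "nat \<Rightarrow> nat \<Rightarrow> (nat \<Rightarrow> real) \<Rightarrow> real" where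
  "head_l2 N j x = sqrt (\<Sum>i\<in>{1..<j}. (xstar N x i)^2)"

definition tail_lq :: "nat \<Rightarrow> real \<Rightarrow> nat \<Rightarrow> (nat \<Rightarrow> real) \<Rightarrow> real" where
  "tail_lq N q j x = (\<Sum>i\<in>{j..N}. (xstar N x i) powr q) powr (1 / q)"

definition l2norm :: "nat \<Rightarrow> (nat \<Rightarrow> real) \<Rightarrow> real" where
  "l2norm N x = sqrt (\<Sum>i\<in>{1..N}. (x i)^2)"

definition is_seminorm :: "nat \<Rightarrow> ((nat \<Rightarrow> real) \<Rightarrow> real) \<Rightarrow> bool" where
  "is_seminorm N f \<longleftrightarrow>
     (\<forall>x\<in>RN N. \<forall>y\<in>RN N. f (\<lambda>i. x i + y i) \<le> f x + f y) \<and>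
     (\<forall>x\<in>RN N. \<forall>a::real. f (\<lambda>i. a * x i) = \<bar>a\<bar> * f x)"

definition admissible :: "(nat \<Rightarrow> real) set \<Rightarrow> (nat \<Rightarrow> (nat \<Rightarrow> real) set) \<Rightarrow> bool" where
  "admissible V Vs \<longleftrightarrow> (\<forall>s. Vs s \<subseteq> V \<and> finite (Vs s) \<and> card (Vs s) \<le> 2 ^ (2 ^ s)) \<and> card (Vs 0) = 1"

definition Delta :: "(nat \<Rightarrow> (nat \<Rightarrow> real) \<Rightarrow> (nat \<Rightarrow> real)) \<Rightarrow> nat \<Rightarrow> (nat \<Rightarrow> real) \<Rightarrow> (nat \<Rightarrow> real)" where
  "Delta \<pi> s v = (\<lambda>i. \<pi> (Suc s) v i - \<pi> s v i)"

definition structA ::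
  "nat \<Rightarrow> real \<Rightarrow> (nat \<Rightarrow> real) set \<Rightarrow> nat \<Rightarrow> (nat \<Rightarrow> (nat \<Rightarrow> real) set)
   \<Rightarrow> (nat \<Rightarrow> (nat \<Rightarrow> real) \<Rightarrow> (nat \<Rightarrow> real))
   \<Rightarrow> (nat \<Rightarrow> (nat \<Rightarrow> real) \<Rightarrow> real) \<Rightarrow> ((nat \<Rightarrow> real) \<Rightarrow> real) \<Rightarrow> (nat \<Rightarrow> nat) \<Rightarrow> bool" where
  "structA N p V s0 Vs \<pi> nrm nrm0 j \<longleftrightarrow>
     p \<ge> 1 \<and> V \<subseteq> RN N \<and> admissible V Vs \<and>
     (\<forall>s. \<forall>v\<in>V. \<pi> s v \<in> Vs s) \<and>
     (\<forall>v\<in>V. \<forall>i. (\<lambda>k. Delta \<pi> (s0 + k) v i) sums (v i - \<pi> s0 v i)) \<and>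
     (\<forall>s\<ge>s0. is_seminorm N (nrm s)) \<and> is_seminorm N nrm0 \<and>
     (\<forall>s\<ge>s0. \<forall>s'\<ge>s. j s \<le> j s') \<and>
     (\<forall>s\<ge>s0. 1 \<le> j s \<and> j s \<le> N + 1) \<and>
     (\<forall>s\<ge>s0. \<forall>v\<in>V.
        head_l2 N (j s) (Delta \<pi> s v) \<le> nrm s (Delta \<pi> s v) \<and>
        tail_lq N (2 * p) (j s) (Delta \<pi> s v) \<le> nrm0 (Delta \<pi> s v) * real N powr (1 / (2 * p)) \<and>
        head_l2 N (j s) (\<pi> s v) \<le> nrm s (\<pi> s v) \<and>
        tail_lq N (2 * p) (j s) (\<pi> s v) \<le> nrm0 (\<pi> s v) * real N powr (1 / (2 * p)))"

text \<open>Lambda(V) and Theta(V), as extended reals (the supremum may be infinite).\<close>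
definition LambdaV ::
  "(nat \<Rightarrow> real) set \<Rightarrow> nat \<Rightarrow> (nat \<Rightarrow> (nat \<Rightarrow> real) \<Rightarrow> (nat \<Rightarrow> real))
   \<Rightarrow> (nat \<Rightarrow> (nat \<Rightarrow> real) \<Rightarrow> real) \<Rightarrow> ereal" where
  "LambdaV V s0 \<pi> nrm = (SUP v\<in>V. (\<Sum>k. ereal (nrm (s0 + k) (Delta \<pi> (s0 + k) v)))
                                     + ereal (nrm s0 (\<pi> s0 v)))"

definition ThetaV ::
  "(nat \<Rightarrow> real) set \<Rightarrow> nat \<Rightarrow> (nat \<Rightarrow> (nat \<Rightarrow> real) \<Rightarrow> (nat \<Rightarrow> real))
   \<Rightarrow> ((nat \<Rightarrow> real) \<Rightarrow> real) \<Rightarrow> ereal" where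
  "ThetaV V s0 \<pi> nrm0 = (SUP v\<in>V. (\<Sum>k. ereal (2 powr (real (s0 + k) / 2) * nrm0 (Delta \<pi> (s0 + k) v)))
                                     + ereal (2 powr (real s0 / 2) * nrm0 (\<pi> s0 v)))"

text \<open>Sign vectors: the law of N independent symmetric Rademacher variables is the uniform
  distribution on this finite set.\<close>
definition signs :: "nat \<Rightarrow> (nat \<Rightarrow> real) set" where
  "signs N = {e. (\<forall>i\<in>{1..N}. e i = 1 \<or> e i = -1) \<and> (\<forall>i. i \<notin> {1..N} \<longrightarrow> e i = 0)}"

definition rademacher :: "nat \<Rightarrow> (nat \<Rightarrow> real) measure" where
  "rademacher N = measure_pmf (pmf_of_set (signs N))"

end

theory Submission
  imports Defs
begin


lemma cosh_bound: fixes a :: real shows "exp a + exp (- a) \<le> 2 * exp (a^2 / 2)"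
proof -
  have h: "- (2*\<bar>a\<bar>) * (1/2) + ln (1 + (1/2) * (exp (2*\<bar>a\<bar>) - 1)) \<le> (2*\<bar>a\<bar>)\<^sup>2 / 8"
    by (rule Hoeffdings_lemma_aux) auto
  have "0 \<le> (1/2) * (exp (2*\<bar>a\<bar>) - 1)" by (intro mult_nonneg_nonneg) auto
  hence pos: "0 < 1 + (1/2) * (exp (2*\<bar>a\<bar>) - 1)" by linarith
  have "ln (1 + (1/2) * (exp (2*\<bar>a\<bar>) - 1)) \<le> \<bar>a\<bar> + a^2/2"
    using h by (simp add: power2_eq_square)
  hence "exp (ln (1 + (1/2) * (exp (2*\<bar>a\<bar>) - 1))) \<le> exp (\<bar>a\<bar> + a^2/2)"
    by simp
  hence "1 + (1/2) * (exp (2*\<bar>a\<bar>) - 1) \<le> exp (\<bar>a\<bar> + a^2/2)"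
    using pos by simp
  hence "(exp \<bar>a\<bar> + exp (-\<bar>a\<bar>)) * exp \<bar>a\<bar> \<le> 2 * exp (a^2/2) * exp \<bar>a\<bar>"
    by (simp add: algebra_simps exp_add[symmetric] mult_exp_exp)
  hence "exp \<bar>a\<bar> + exp (-\<bar>a\<bar>) \<le> 2 * exp (a^2/2)" by simp
  thus ?thesis by (cases "a \<ge> 0") (auto simp: add.commute)
qed

lemma signs_0: "signs 0 = {\<lambda>_. 0}"
  unfolding signs_def by (auto simp: fun_eq_iff)

lemma signs_zero_Suc: "e \<in> signs n \<Longrightarrow> e (Suc n) = 0"
  unfolding signs_def by auto

lemma signs_Suc: "signs (Suc n) = (\<lambda>e. e(Suc n := 1)) ` signs n \<union> (\<lambda>e. e(Suc n := -1)) ` signs n"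
proof
  show "signs (Suc n) \<subseteq> (\<lambda>e. e(Suc n := 1)) ` signs n \<union> (\<lambda>e. e(Suc n := -1)) ` signs n"
  proof
    fix e assume e: "e \<in> signs (Suc n)"
    define e' where "e' = e(Suc n := 0)"
    have e': "e' \<in> signs n" using e unfolding signs_def e'_def by (auto simp: le_Suc_eq)
    have "e (Suc n) = 1 \<or> e (Suc n) = -1" using e unfolding signs_def by auto
    moreover have "e = e'(Suc n := e (Suc n))" unfolding e'_def by auto
    ultimately show "e \<in> (\<lambda>e. e(Suc n := 1)) ` signs n \<union> (\<lambda>e. e(Suc n := -1)) ` signs n"
      using e' by (metis UnI1 UnI2 image_eqI)
  qed
next
  show "(\<lambda>e. e(Suc n := 1)) ` signs n \<union> (\<lambda>e. e(Suc n := -1)) ` signs n \<subseteq> signs (Suc n)"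
    unfolding signs_def Ball_def by (auto simp: le_Suc_eq)
qed

lemma finite_signs: "finite (signs n)"
  by (induction n) (auto simp: signs_0 signs_Suc)

lemma inj_signs_upd: "inj_on (\<lambda>e. e(Suc n := c)) (signs n)"
  by (rule inj_onI) (metis fun_upd_triv fun_upd_upd signs_zero_Suc)

lemma disj_signs_upd: "(\<lambda>e. e(Suc n := 1)) ` signs n \<inter> (\<lambda>e. e(Suc n := -1)) ` signs n = {}"
proof -
  have "x (Suc n) = 1" if "x \<in> (\<lambda>e. e(Suc n := 1)) ` signs n" for x using that by auto
  moreover have "x (Suc n) = -1" if "x \<in> (\<lambda>e. e(Suc n := -1)) ` signs n" for x using that by auto
  ultimately show ?thesis by force
qed

lemma card_signs: "card (signs n) = 2^n"
proof (induction n)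
  case 0 show ?case by (simp add: signs_0)
next
  case (Suc n)
  show ?case unfolding signs_Suc
    by (simp add: card_Un_disjoint finite_signs disj_signs_upd card_image inj_signs_upd Suc)
qed

lemma signs_ne: "signs n \<noteq> {}"
  using card_signs[of n] by auto

lemma sum_signs_Suc: "(\<Sum>e\<in>signs (Suc n). f e) = (\<Sum>e\<in>signs n. f (e(Suc n := 1)) + f (e(Suc n := -1)))"
  unfolding signs_Suc
  by (simp add: sum.union_disjoint finite_signs disj_signs_upd sum.reindex inj_signs_upd sum.distrib)

lemma sum_upd: "(\<Sum>i\<in>{1..Suc n}. (e(Suc n := c)) i * a i) = (\<Sum>i\<in>{1..n}. e i * a i) + c * a (Suc n)"
proof -
  have s: "{1..Suc n} = insert (Suc n) {1..n}" by auto
  have "(\<Sum>i\<in>{1..n}. (e(Suc n := c)) i * a i) = (\<Sum>i\<in>{1..n}. e i * a i)"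
    by (rule sum.cong) auto
  thus ?thesis unfolding s by (simp add: ac_simps)
qed

lemma exp_pm: "exp (x + y) + exp (x - y) = (exp y + exp (-y)) * exp (x::real)"
  by (simp add: distrib_right add.commute flip: exp_add)

lemma mgf_signs: "(\<Sum>e\<in>signs N. exp (\<Sum>i\<in>{1..N}. e i * a i)) \<le> 2^N * exp ((\<Sum>i\<in>{1..N}. (a i)^2) / 2)"
proof (induction N)
  case 0 show ?case by (simp add: signs_0)
next
  case (Suc n)
  let ?S = "\<lambda>e. \<Sum>i\<in>{1..n}. e i * a i"
  have "(\<Sum>e\<in>signs (Suc n). exp (\<Sum>i\<in>{1..Suc n}. e i * a i)) = (\<Sum>e\<in>signs n. exp (?S e + a (Suc n)) + exp (?S e - a (Suc n)))"
    by (simp add: sum_signs_Suc sum_upd)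
  also have "\<dots> = (exp (a (Suc n)) + exp (- a (Suc n))) * (\<Sum>e\<in>signs n. exp (?S e))"
    by (simp add: exp_pm sum_distrib_left)
  also have "\<dots> \<le> (2 * exp ((a (Suc n))^2 / 2)) * (2^n * exp ((\<Sum>i\<in>{1..n}. (a i)^2) / 2))"
    by (rule mult_mono[OF cosh_bound Suc]) (auto intro: sum_nonneg)
  also have "\<dots> = 2^(Suc n) * exp ((\<Sum>i\<in>{1..Suc n}. (a i)^2) / 2)"
  proof -
    have s: "{1..Suc n} = insert (Suc n) {1..n}" by auto
    show ?thesis unfolding s by (simp add: add_divide_distrib exp_add)
  qed
  finally show ?case .
qed

lemma tail_one:
  assumes y: "y \<ge> 0"
  shows "real (card {e\<in>signs N. y * sqrt (\<Sum>i\<in>{1..N}. (a i)^2) < (\<Sum>i\<in>{1..N}. e i * a i)})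
           \<le> 2^N * exp (- (y^2)/2)"
proof (cases "(\<Sum>i\<in>{1..N}. (a i)^2) = 0")
  case True
  hence "\<forall>i\<in>{1..N}. a i = 0" by (simp add: sum_nonneg_eq_0_iff)
  hence z: "(\<Sum>i\<in>{1..N}. e i * a i) = 0" for e by simp
  have E: "{e\<in>signs N. y * sqrt (\<Sum>i\<in>{1..N}. (a i)^2) < (\<Sum>i\<in>{1..N}. e i * a i)} = {}"
    unfolding True z by simp
  show ?thesis by (subst E) simp
next
  case False
  define s2 where "s2 = (\<Sum>i\<in>{1..N}. (a i)^2)"
  have s2pos: "s2 > 0" using False unfolding s2_def
    by (metis less_eq_real_def sum_nonneg zero_le_power2)
  define s where "s = sqrt s2"
  have spos: "s > 0" unfolding s_def using s2pos by simp
  define l where "l = y / s"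
  have lnn: "l \<ge> 0" unfolding l_def using y spos by simp
  define S where "S = {e\<in>signs N. y * sqrt (\<Sum>i\<in>{1..N}. (a i)^2) < (\<Sum>i\<in>{1..N}. e i * a i)}"
  have fS: "finite S" unfolding S_def using finite_signs by simp
  have sub: "S \<subseteq> signs N" unfolding S_def by auto
  have bsum: "(\<Sum>i\<in>{1..N}. (l * a i)^2) = y^2"
  proof -
    have "(\<Sum>i\<in>{1..N}. (l * a i)^2) = l^2 * s2" unfolding s2_def
      by (simp add: power_mult_distrib sum_distrib_left)
    also have "\<dots> = y^2" unfolding l_def s_def using s2pos by (simp add: power_divide)
    finally show ?thesis .
  qed
  have big: "exp (y^2) \<le> exp (\<Sum>i\<in>{1..N}. e i * (l * a i))" if "e \<in> S" for e
  proof -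
    have "y * s < (\<Sum>i\<in>{1..N}. e i * a i)" using that unfolding S_def s_def s2_def by auto
    hence "l * (y * s) \<le> l * (\<Sum>i\<in>{1..N}. e i * a i)" using lnn by (simp add: mult_left_mono)
    moreover have "l * (y * s) = y^2" unfolding l_def using spos by (simp add: power2_eq_square)
    moreover have "l * (\<Sum>i\<in>{1..N}. e i * a i) = (\<Sum>i\<in>{1..N}. e i * (l * a i))"
      by (simp add: sum_distrib_left algebra_simps)
    ultimately show ?thesis by simp
  qed
  have "real (card S) * exp (y^2) = (\<Sum>e\<in>S. exp (y^2))" by simp
  also have "\<dots> \<le> (\<Sum>e\<in>S. exp (\<Sum>i\<in>{1..N}. e i * (l * a i)))"
    by (rule sum_mono) (rule big)
  also have "\<dots> \<le> (\<Sum>e\<in>signs N. exp (\<Sum>i\<in>{1..N}. e i * (l * a i)))"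
    by (rule sum_mono2[OF finite_signs sub]) simp
  also have "\<dots> \<le> 2^N * exp (y^2 / 2)"
    using mgf_signs[where N=N and a="\<lambda>i. l * a i"] bsum by simp
  finally have "real (card S) * exp (y^2) \<le> 2^N * exp (y^2 / 2)" .
  hence "real (card S) \<le> 2^N * exp (y^2 / 2) / exp (y^2)"
    by (simp add: pos_le_divide_eq)
  also have "\<dots> = 2^N * exp (- (y^2)/2)" by (simp add: exp_diff[symmetric] exp_minus field_simps mult_exp_exp)
  finally show ?thesis unfolding S_def .
qed

lemma tail_two:
  assumes y: "y \<ge> 0"
  shows "real (card {e\<in>signs N. y * sqrt (\<Sum>i\<in>{1..N}. (a i)^2) < \<bar>\<Sum>i\<in>{1..N}. e i * a i\<bar>})
           \<le> 2 * 2^N * exp (- (y^2)/2)"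
proof -
  let ?s = "sqrt (\<Sum>i\<in>{1..N}. (a i)^2)"
  have eq: "sqrt (\<Sum>i\<in>{1..N}. (- a i)^2) = ?s" by simp
  have neg: "(\<Sum>i\<in>{1..N}. e i * (- a i)) = - (\<Sum>i\<in>{1..N}. e i * a i)" for e
    by (simp add: sum_negf)
  have "{e\<in>signs N. y * ?s < \<bar>\<Sum>i\<in>{1..N}. e i * a i\<bar>} \<subseteq>
        {e\<in>signs N. y * ?s < (\<Sum>i\<in>{1..N}. e i * a i)} \<union>
        {e\<in>signs N. y * sqrt (\<Sum>i\<in>{1..N}. (- a i)^2) < (\<Sum>i\<in>{1..N}. e i * (- a i))}"
    unfolding eq neg by auto
  hence "card {e\<in>signs N. y * ?s < \<bar>\<Sum>i\<in>{1..N}. e i * a i\<bar>} \<le>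
        card ({e\<in>signs N. y * ?s < (\<Sum>i\<in>{1..N}. e i * a i)} \<union>
        {e\<in>signs N. y * sqrt (\<Sum>i\<in>{1..N}. (- a i)^2) < (\<Sum>i\<in>{1..N}. e i * (- a i))})"
    by (intro card_mono) (auto simp: finite_signs)
  also have "\<dots> \<le> card {e\<in>signs N. y * ?s < (\<Sum>i\<in>{1..N}. e i * a i)} +
        card {e\<in>signs N. y * sqrt (\<Sum>i\<in>{1..N}. (- a i)^2) < (\<Sum>i\<in>{1..N}. e i * (- a i))}"
    by (rule card_Un_le)
  finally have "real (card {e\<in>signs N. y * ?s < \<bar>\<Sum>i\<in>{1..N}. e i * a i\<bar>}) \<le>
        real (card {e\<in>signs N. y * ?s < (\<Sum>i\<in>{1..N}. e i * a i)}) +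
        real (card {e\<in>signs N. y * sqrt (\<Sum>i\<in>{1..N}. (- a i)^2) < (\<Sum>i\<in>{1..N}. e i * (- a i))})"
    by linarith
  also have "\<dots> \<le> 2^N * exp (- (y^2)/2) + 2^N * exp (- (y^2)/2)"
    by (intro add_mono tail_one y)
  finally show ?thesis by simp
qed

lemma measure_rademacher: "measure (rademacher N) A = real (card (signs N \<inter> A)) / 2^N"
  unfolding rademacher_def
  by (simp add: measure_pmf_of_set[OF signs_ne finite_signs] card_signs)

lemma tail_prob:
  assumes y: "y \<ge> 0"
  shows "measure (rademacher N) {e\<in>signs N. y * sqrt (\<Sum>i\<in>{1..N}. (a i)^2) < \<bar>\<Sum>i\<in>{1..N}. e i * a i\<bar>}
           \<le> 2 * exp (- (y^2)/2)"
proof -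
  have "signs N \<inter> {e\<in>signs N. y * sqrt (\<Sum>i\<in>{1..N}. (a i)^2) < \<bar>\<Sum>i\<in>{1..N}. e i * a i\<bar>}
      = {e\<in>signs N. y * sqrt (\<Sum>i\<in>{1..N}. (a i)^2) < \<bar>\<Sum>i\<in>{1..N}. e i * a i\<bar>}" by auto
  thus ?thesis unfolding measure_rademacher using tail_two[OF y, where N=N and a=a]
    by (simp add: divide_le_eq mult.commute)
qed



lemma xstar_perm:
  obtains \<sigma> where "bij_betw \<sigma> {1..N} {1..N}"
    "\<And>i. i \<in> {1..N} \<Longrightarrow> xstar N x i = \<bar>x (\<sigma> i)\<bar>"
    "\<And>i k. 1 \<le> i \<Longrightarrow> i \<le> k \<Longrightarrow> k \<le> N \<Longrightarrow> xstar N x k \<le> xstar N x i"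
proof -
  define L where "L = map (\<lambda>k. \<bar>x k\<bar>) [1..<N+1]"
  have lenL: "length L = N" unfolding L_def by simp
  have "mset (rev (sort L)) = mset L" by simp
  from mset_eq_permutation[OF this] obtain p where p: "p permutes {..<length L}"
    and pl: "permute_list p L = rev (sort L)" by blast
  have pin: "p m < N" if "m < N" for m using permutes_in_image[OF p, of m] that lenL by auto
  have xs: "xstar N x i = \<bar>x (p (i - 1) + 1)\<bar>" if "i \<in> {1..N}" for i
  proof -
    have "xstar N x i = rev (sort L) ! (i - 1)" unfolding xstar_def L_def by simp
    also have "\<dots> = permute_list p L ! (i - 1)" using pl by simp
    also have "\<dots> = L ! (p (i - 1))" using permute_list_nth[OF p, of "i-1"] that lenL by auto
    also have "\<dots> = \<bar>x (p (i - 1) + 1)\<bar>"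
    proof -
      have "p (i - 1) < N" using pin that by auto
      thus ?thesis unfolding L_def by (simp del: upt_Suc add: add.commute)
    qed
    finally show ?thesis .
  qed
  define \<sigma> where "\<sigma> = (\<lambda>i. p (i - 1) + 1)"
  have inj: "inj_on \<sigma> {1..N}"
  proof (rule inj_onI)
    fix a b assume ab: "a \<in> {1..N}" "b \<in> {1..N}" "\<sigma> a = \<sigma> b"
    hence "p (a - 1) = p (b - 1)" unfolding \<sigma>_def by simp
    hence "a - 1 = b - 1" using permutes_inj[OF p] by (simp add: inj_eq)
    thus "a = b" using ab by auto
  qed
  have img: "\<sigma> ` {1..N} \<subseteq> {1..N}"
  proof (intro image_subsetI)
    fix i assume "i \<in> {1..N}"
    hence "p (i - 1) < N" using pin by auto
    thus "\<sigma> i \<in> {1..N}" unfolding \<sigma>_def by auto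
  qed
  have bij: "bij_betw \<sigma> {1..N} {1..N}"
    unfolding bij_betw_def using inj endo_inj_surj[OF _ img inj] by simp
  have anti: "xstar N x k \<le> xstar N x i" if "1 \<le> i" "i \<le> k" "k \<le> N" for i k
  proof -
    have "xstar N x k = sort L ! (N - k)"
      unfolding xstar_def L_def[symmetric] using that lenL by (simp add: rev_nth)
    also have "\<dots> \<le> sort L ! (N - i)"
      by (rule sorted_nth_mono) (use that lenL in auto)
    also have "\<dots> = xstar N x i"
      unfolding xstar_def L_def[symmetric] using that lenL by (simp add: rev_nth)
    finally show ?thesis .
  qed
  show ?thesis
    by (rule that[OF bij]) (use xs anti in \<open>auto simp: \<sigma>_def\<close>)
qed

definition topP :: "nat \<Rightarrow> nat \<Rightarrow> (nat \<Rightarrow> real) \<Rightarrow> nat set \<Rightarrow> bool" where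
  "topP N j x T \<longleftrightarrow> T \<subseteq> {1..N} \<and> card T = j - 1 \<and>
     (\<Sum>i\<in>T. (x i)^2) = (\<Sum>i\<in>{1..<j}. (xstar N x i)^2) \<and>
     (\<forall>q. (\<Sum>i\<in>{1..N} - T. \<bar>x i\<bar> powr q) = (\<Sum>i\<in>{j..N}. (xstar N x i) powr q)) \<and>
     (\<forall>B. B \<subseteq> {1..N} - T \<longrightarrow> card B \<le> j - 1 \<longrightarrow> (\<Sum>i\<in>B. (x i)^2) \<le> (\<Sum>i\<in>{1..<j}. (xstar N x i)^2))"

lemma topP_ex:
  assumes j: "1 \<le> j" "j \<le> N + 1"
  shows "\<exists>T. topP N j x T"
proof -
  obtain \<sigma> where bij: "bij_betw \<sigma> {1..N} {1..N}" and xs: "\<And>i. i \<in> {1..N} \<Longrightarrow> xstar N x i = \<bar>x (\<sigma> i)\<bar>"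
    and anti: "\<And>i k. 1 \<le> i \<Longrightarrow> i \<le> k \<Longrightarrow> k \<le> N \<Longrightarrow> xstar N x k \<le> xstar N x i"
    using xstar_perm[where N=N and x=x] by blast
  define T where "T = \<sigma> ` {1..<j}"
  have sub1: "{1..<j} \<subseteq> {1..N}" using j by auto
  have sub2: "{j..N} \<subseteq> {1..N}" using j by auto
  have inj: "inj_on \<sigma> {1..N}" using bij by (simp add: bij_betw_def)
  have img: "\<sigma> ` {1..N} = {1..N}" using bij by (simp add: bij_betw_def)
  have Tsub: "T \<subseteq> {1..N}" unfolding T_def using img sub1 by auto
  have cardT: "card T = j - 1" unfolding T_def using card_image[OF inj_on_subset[OF inj sub1]] by simp
  have split: "{1..N} = {1..<j} \<union> {j..N}" using j by auto
  have compl: "{1..N} - T = \<sigma> ` {j..N}"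
  proof -
    have U: "{1..N} = \<sigma> ` {1..<j} \<union> \<sigma> ` {j..N}" using img split by (metis image_Un)
    have "\<sigma> ` {1..<j} \<inter> \<sigma> ` {j..N} = \<sigma> ` ({1..<j} \<inter> {j..N})"
      using inj_on_image_Int[OF inj sub1 sub2] by simp
    also have "\<dots> = {}" by auto
    finally show ?thesis unfolding T_def using U by blast
  qed
  have xnn: "0 \<le> xstar N x i" if "i \<in> {1..N}" for i using xs[OF that] by simp
  have P1: "(\<Sum>i\<in>T. (x i)^2) = (\<Sum>i\<in>{1..<j}. (xstar N x i)^2)"
  proof -
    have "(\<Sum>i\<in>T. (x i)^2) = (\<Sum>i\<in>{1..<j}. (x (\<sigma> i))^2)"
      unfolding T_def using sum.reindex[OF inj_on_subset[OF inj sub1], of "\<lambda>i. (x i)^2"] by simp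
    also have "\<dots> = (\<Sum>i\<in>{1..<j}. (xstar N x i)^2)"
    proof (rule sum.cong[OF refl])
      fix i assume "i \<in> {1..<j}"
      hence "i \<in> {1..N}" using sub1 by blast
      thus "(x (\<sigma> i))^2 = (xstar N x i)^2" using xs by simp
    qed
    finally show ?thesis .
  qed
  have P2: "(\<Sum>i\<in>{1..N} - T. \<bar>x i\<bar> powr q) = (\<Sum>i\<in>{j..N}. (xstar N x i) powr q)" for q
  proof -
    have "(\<Sum>i\<in>{1..N} - T. \<bar>x i\<bar> powr q) = (\<Sum>i\<in>{j..N}. \<bar>x (\<sigma> i)\<bar> powr q)"
      unfolding compl using sum.reindex[OF inj_on_subset[OF inj sub2], of "\<lambda>i. \<bar>x i\<bar> powr q"] by simp
    also have "\<dots> = (\<Sum>i\<in>{j..N}. (xstar N x i) powr q)"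
    proof (rule sum.cong[OF refl])
      fix i assume "i \<in> {j..N}"
      hence "i \<in> {1..N}" using sub2 by blast
      thus "\<bar>x (\<sigma> i)\<bar> powr q = (xstar N x i) powr q" using xs by simp
    qed
    finally show ?thesis .
  qed
  have P3: "(\<Sum>i\<in>B. (x i)^2) \<le> (\<Sum>i\<in>{1..<j}. (xstar N x i)^2)"
    if B: "B \<subseteq> {1..N} - T" "card B \<le> j - 1" for B
  proof (cases "B = {}")
    case True thus ?thesis by (simp add: sum_nonneg)
  next
    case False
    then obtain b where "b \<in> B" by auto
    hence "b \<in> \<sigma> ` {j..N}" using B compl by auto
    hence jN: "j \<le> N" by auto
    have finB: "finite B" using B(1) finite_subset by blast
    have le1: "(x b)^2 \<le> (xstar N x j)^2" if "b \<in> B" for b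
    proof -
      from that B compl obtain k where k: "k \<in> {j..N}" "b = \<sigma> k" by auto
      have "\<bar>x b\<bar> = xstar N x k" using xs[of k] k sub2 by auto
      also have "\<dots> \<le> xstar N x j" using anti[of j k] k j by auto
      finally have "\<bar>x b\<bar> \<le> xstar N x j" .
      hence "\<bar>x b\<bar>^2 \<le> (xstar N x j)^2" by (rule power_mono) simp
      thus ?thesis by simp
    qed
    have "(\<Sum>i\<in>B. (x i)^2) \<le> (\<Sum>i\<in>B. (xstar N x j)^2)" by (rule sum_mono) (rule le1)
    also have "\<dots> = real (card B) * (xstar N x j)^2" by simp
    also have "\<dots> \<le> real (j - 1) * (xstar N x j)^2" using B(2) by (intro mult_right_mono) auto
    also have "\<dots> = (\<Sum>i\<in>{1..<j}. (xstar N x j)^2)" by simp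
    also have "\<dots> \<le> (\<Sum>i\<in>{1..<j}. (xstar N x i)^2)"
    proof (rule sum_mono)
      fix i assume i: "i \<in> {1..<j}"
      have "xstar N x j \<le> xstar N x i" using anti[of i j] i jN by auto
      moreover have "0 \<le> xstar N x j" using xnn jN j by auto
      ultimately show "(xstar N x j)^2 \<le> (xstar N x i)^2" by (rule power_mono)
    qed
    finally show ?thesis .
  qed
  show ?thesis unfolding topP_def using Tsub cardT P1 P2 P3 by blast
qed

definition topset :: "nat \<Rightarrow> nat \<Rightarrow> (nat \<Rightarrow> real) \<Rightarrow> nat set" where
  "topset N j x = (SOME T. topP N j x T)"

lemma topset: "1 \<le> j \<Longrightarrow> j \<le> N + 1 \<Longrightarrow> topP N j x (topset N j x)"
  unfolding topset_def by (rule someI_ex) (rule topP_ex)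

lemma holder_sum:
  fixes f g :: "nat \<Rightarrow> real"
  assumes A: "finite A" and pq: "p > 1" "q > 1" "1/p + 1/q = 1"
    and f: "\<And>i. i\<in>A \<Longrightarrow> f i \<ge> 0" and g: "\<And>i. i\<in>A \<Longrightarrow> g i \<ge> 0"
  shows "(\<Sum>i\<in>A. f i * g i) \<le> (\<Sum>i\<in>A. f i powr p) powr (1/p) * (\<Sum>i\<in>A. g i powr q) powr (1/q)"
proof -
  define F where "F = (\<Sum>i\<in>A. f i powr p) powr (1/p)"
  define G where "G = (\<Sum>i\<in>A. g i powr q) powr (1/q)"
  have Fp: "F powr p = (\<Sum>i\<in>A. f i powr p)" unfolding F_def using pq
    by (simp add: powr_powr sum_nonneg)
  have Gq: "G powr q = (\<Sum>i\<in>A. g i powr q)" unfolding G_def using pq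
    by (simp add: powr_powr sum_nonneg)
  have Fnn: "F \<ge> 0" "G \<ge> 0" unfolding F_def G_def by auto
  show ?thesis unfolding F_def[symmetric] G_def[symmetric]
  proof (cases "F = 0 \<or> G = 0")
    case True
    have "(\<forall>i\<in>A. f i = 0) \<or> (\<forall>i\<in>A. g i = 0)"
      using True
    proof (elim disjE)
      assume "F = 0"
      hence "(\<Sum>i\<in>A. f i powr p) = 0" using Fp pq by simp
      hence "\<forall>i\<in>A. f i powr p = 0" using A f by (simp add: sum_nonneg_eq_0_iff)
      thus ?thesis by simp
    next
      assume "G = 0"
      hence "(\<Sum>i\<in>A. g i powr q) = 0" using Gq pq by simp
      hence "\<forall>i\<in>A. g i powr q = 0" using A g by (simp add: sum_nonneg_eq_0_iff)
      thus ?thesis by simp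
    qed
    hence "(\<Sum>i\<in>A. f i * g i) = 0" by auto
    thus "(\<Sum>i\<in>A. f i * g i) \<le> F * G" using Fnn by simp
  next
    case False
    hence Fpos: "F > 0" and Gpos: "G > 0" using Fnn by auto
    have s1: "(\<Sum>i\<in>A. (f i / F) powr p / p) = 1 / p"
    proof -
      have "(\<Sum>i\<in>A. (f i / F) powr p / p) = (\<Sum>i\<in>A. f i powr p / F powr p / p)"
        by (rule sum.cong) (simp_all add: powr_divide f less_imp_le[OF Fpos])
      also have "\<dots> = (\<Sum>i\<in>A. f i powr p) / F powr p / p" by (simp add: sum_divide_distrib)
      also have "\<dots> = 1 / p" using Fpos by (simp add: Fp[symmetric])
      finally show ?thesis .
    qed
    have s2: "(\<Sum>i\<in>A. (g i / G) powr q / q) = 1 / q"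
    proof -
      have "(\<Sum>i\<in>A. (g i / G) powr q / q) = (\<Sum>i\<in>A. g i powr q / G powr q / q)"
        by (rule sum.cong) (simp_all add: powr_divide g less_imp_le[OF Gpos])
      also have "\<dots> = (\<Sum>i\<in>A. g i powr q) / G powr q / q" by (simp add: sum_divide_distrib)
      also have "\<dots> = 1 / q" using Gpos by (simp add: Gq[symmetric])
      finally show ?thesis .
    qed
    have "(\<Sum>i\<in>A. f i * g i) / (F * G) = (\<Sum>i\<in>A. (f i / F) * (g i / G))"
      by (simp add: sum_divide_distrib)
    also have "\<dots> \<le> (\<Sum>i\<in>A. (f i / F) powr p / p + (g i / G) powr q / q)"
      by (rule sum_mono, rule Youngs_inequality) (use pq f g Fpos Gpos in auto)
    also have "\<dots> = 1" using s1 s2 pq by (simp add: sum.distrib)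
    finally have "(\<Sum>i\<in>A. f i * g i) / (F * G) \<le> 1" .
    thus "(\<Sum>i\<in>A. f i * g i) \<le> F * G" using Fpos Gpos by (simp add: divide_le_eq)
  qed
qed

lemma holder_sq:
  fixes z u :: "nat \<Rightarrow> real"
  assumes R: "finite R" and r: "r > 1" "r' > 1" "1/r + 1/r' = 1"
  shows "sqrt (\<Sum>i\<in>R. (z i * u i)^2) \<le> (\<Sum>i\<in>R. \<bar>z i\<bar> powr (2*r)) powr (1/(2*r)) * (\<Sum>i\<in>R. \<bar>u i\<bar> powr (2*r')) powr (1/(2*r'))"
proof -
  have sq: "((w::real)^2) powr a = \<bar>w\<bar> powr (2*a)" for w a
  proof (cases "w = 0")
    case True thus ?thesis by simp
  next
    case False
    have h: "w^2 = \<bar>w\<bar> powr 2" by simp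
    show ?thesis by (subst h) (rule powr_powr)
  qed
  define Sz where "Sz = (\<Sum>i\<in>R. \<bar>z i\<bar> powr (2*r))"
  define Su where "Su = (\<Sum>i\<in>R. \<bar>u i\<bar> powr (2*r'))"
  have "(\<Sum>i\<in>R. (z i * u i)^2) = (\<Sum>i\<in>R. (z i)^2 * (u i)^2)" by (simp add: power_mult_distrib)
  also have "\<dots> \<le> (\<Sum>i\<in>R. ((z i)^2) powr r) powr (1/r) * (\<Sum>i\<in>R. ((u i)^2) powr r') powr (1/r')"
    by (rule holder_sum) (use R r in auto)
  also have "\<dots> = Sz powr (1/r) * Su powr (1/r')"
    unfolding Sz_def Su_def by (simp add: sq)
  finally have le: "(\<Sum>i\<in>R. (z i * u i)^2) \<le> Sz powr (1/r) * Su powr (1/r')" .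
  have nn: "Sz \<ge> 0" "Su \<ge> 0" unfolding Sz_def Su_def by (auto intro: sum_nonneg)
  have "sqrt (\<Sum>i\<in>R. (z i * u i)^2) \<le> sqrt (Sz powr (1/r) * Su powr (1/r'))"
    using le by (rule real_sqrt_le_mono)
  also have "\<dots> = sqrt (Sz powr (1/r)) * sqrt (Su powr (1/r'))" by (simp add: real_sqrt_mult)
  also have "\<dots> = Sz powr (1/(2*r)) * Su powr (1/(2*r'))"
  proof -
    have a: "sqrt (Sz powr (1/r)) = Sz powr ((1/r)/2)" using powr_half_sqrt_powr[of Sz "1/r"] nn by simp
    have b: "sqrt (Su powr (1/r')) = Su powr ((1/r')/2)" using powr_half_sqrt_powr[of Su "1/r'"] nn by simp
    show ?thesis unfolding a b by (simp add: mult.commute)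
  qed
  finally show ?thesis unfolding Sz_def Su_def .
qed

lemma cs_sub:
  assumes e: "e \<in> signs N" and S: "S \<subseteq> {1..N}"
  shows "\<bar>\<Sum>i\<in>S. e i * z i * u i\<bar> \<le> l2norm N z * sqrt (\<Sum>i\<in>S. (u i)^2)"
proof -
  have ez: "(e i * z i)^2 = (z i)^2" if "i \<in> S" for i
  proof -
    have "e i = 1 \<or> e i = -1" using e that S unfolding signs_def by auto
    thus ?thesis by (auto simp: power_mult_distrib)
  qed
  have "(\<Sum>i\<in>S. (e i * z i) * u i)^2 \<le> (\<Sum>i\<in>S. (e i * z i)^2) * (\<Sum>i\<in>S. (u i)^2)"
    by (rule Cauchy_Schwarz_ineq_sum)
  also have "\<dots> = (\<Sum>i\<in>S. (z i)^2) * (\<Sum>i\<in>S. (u i)^2)" using ez by simp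
  finally have "sqrt ((\<Sum>i\<in>S. e i * z i * u i)^2) \<le> sqrt ((\<Sum>i\<in>S. (z i)^2) * (\<Sum>i\<in>S. (u i)^2))"
    by (rule real_sqrt_le_mono)
  hence "\<bar>\<Sum>i\<in>S. e i * z i * u i\<bar> \<le> sqrt (\<Sum>i\<in>S. (z i)^2) * sqrt (\<Sum>i\<in>S. (u i)^2)"
    by (simp add: real_sqrt_mult)
  also have "\<dots> \<le> l2norm N z * sqrt (\<Sum>i\<in>S. (u i)^2)"
    unfolding l2norm_def
    by (intro mult_right_mono real_sqrt_le_mono sum_mono2) (use S in \<open>auto intro: sum_nonneg\<close>)
  finally show ?thesis .
qed

lemma piece_det:
  fixes z u e :: "nat \<Rightarrow> real"
  assumes e: "e \<in> signs N" and j: "1 \<le> j0" "j0 \<le> js" "js \<le> N + 1"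
    and r: "r > 1" "r' > 1" "1/r + 1/r' = 1"
  defines "R \<equiv> {1..N} - topset N js u - topset N j0 z"
  shows "\<bar>\<Sum>i\<in>{1..N}. e i * z i * u i\<bar> \<le> 2 * l2norm N z * head_l2 N js u + \<bar>\<Sum>i\<in>R. e i * z i * u i\<bar>"
    and "sqrt (\<Sum>i\<in>R. (z i * u i)^2) \<le> tail_lq N (2*r) j0 z * tail_lq N (2*r') js u"
proof -
  define A where "A = topset N js u"
  define I where "I = topset N j0 z"
  have tA: "topP N js u A" unfolding A_def by (rule topset) (use j in auto)
  have tI: "topP N j0 z I" unfolding I_def by (rule topset) (use j in auto)
  have Asub: "A \<subseteq> {1..N}" and Icard: "card I = j0 - 1" and Isub: "I \<subseteq> {1..N}"
    using tA tI unfolding topP_def by auto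
  have Rdef: "R = {1..N} - A - I" unfolding R_def A_def I_def ..
  have hA: "sqrt (\<Sum>i\<in>A. (u i)^2) = head_l2 N js u"
    using tA unfolding topP_def head_l2_def by simp
  have hIA: "sqrt (\<Sum>i\<in>I - A. (u i)^2) \<le> head_l2 N js u"
  proof -
    have "card (I - A) \<le> card I" using Isub by (intro card_mono) (auto intro: finite_subset)
    hence "card (I - A) \<le> js - 1" using Icard j by simp
    moreover have "I - A \<subseteq> {1..N} - A" using Isub by auto
    ultimately have "(\<Sum>i\<in>I - A. (u i)^2) \<le> (\<Sum>i\<in>{1..<js}. (xstar N u i)^2)"
      using tA unfolding topP_def by blast
    thus ?thesis unfolding head_l2_def by (rule real_sqrt_le_mono)
  qed
  have fin: "finite ({1..N} - A)" by simp
  have d1: "(\<Sum>i\<in>{1..N}. e i * z i * u i) = (\<Sum>i\<in>{1..N} - A. e i * z i * u i) + (\<Sum>i\<in>A. e i * z i * u i)"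
    by (rule sum.subset_diff[OF Asub]) simp
  have d2: "(\<Sum>i\<in>{1..N} - A. e i * z i * u i) = (\<Sum>i\<in>({1..N} - A) - (I - A). e i * z i * u i) + (\<Sum>i\<in>I - A. e i * z i * u i)"
    by (rule sum.subset_diff) (use Isub in auto)
  have d3: "({1..N} - A) - (I - A) = R" unfolding Rdef by auto
  have "\<bar>\<Sum>i\<in>{1..N}. e i * z i * u i\<bar> \<le> \<bar>\<Sum>i\<in>A. e i * z i * u i\<bar> + \<bar>\<Sum>i\<in>I - A. e i * z i * u i\<bar> + \<bar>\<Sum>i\<in>R. e i * z i * u i\<bar>"
    unfolding d1 d2 d3 by linarith
  also have "\<dots> \<le> l2norm N z * head_l2 N js u + l2norm N z * head_l2 N js u + \<bar>\<Sum>i\<in>R. e i * z i * u i\<bar>"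
  proof -
    have "\<bar>\<Sum>i\<in>A. e i * z i * u i\<bar> \<le> l2norm N z * head_l2 N js u"
      using cs_sub[OF e Asub, of z u] hA by simp
    moreover have "\<bar>\<Sum>i\<in>I - A. e i * z i * u i\<bar> \<le> l2norm N z * head_l2 N js u"
    proof -
      have "\<bar>\<Sum>i\<in>I - A. e i * z i * u i\<bar> \<le> l2norm N z * sqrt (\<Sum>i\<in>I - A. (u i)^2)"
        by (rule cs_sub[OF e]) (use Isub in auto)
      also have "\<dots> \<le> l2norm N z * head_l2 N js u"
        by (rule mult_left_mono[OF hIA]) (simp add: l2norm_def sum_nonneg)
      finally show ?thesis .
    qed
    ultimately show ?thesis by linarith
  qed
  finally show "\<bar>\<Sum>i\<in>{1..N}. e i * z i * u i\<bar> \<le> 2 * l2norm N z * head_l2 N js u + \<bar>\<Sum>i\<in>R. e i * z i * u i\<bar>"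
    by simp
  have finR: "finite R" unfolding R_def by simp
  have RI: "R \<subseteq> {1..N} - I" and RA: "R \<subseteq> {1..N} - A" unfolding Rdef by auto
  have "sqrt (\<Sum>i\<in>R. (z i * u i)^2) \<le> (\<Sum>i\<in>R. \<bar>z i\<bar> powr (2*r)) powr (1/(2*r)) * (\<Sum>i\<in>R. \<bar>u i\<bar> powr (2*r')) powr (1/(2*r'))"
    by (rule holder_sq[OF finR r])
  also have "\<dots> \<le> (\<Sum>i\<in>{1..N} - I. \<bar>z i\<bar> powr (2*r)) powr (1/(2*r)) * (\<Sum>i\<in>{1..N} - A. \<bar>u i\<bar> powr (2*r')) powr (1/(2*r'))"
    using r by (intro mult_mono powr_mono2 sum_mono2 RI RA sum_nonneg) auto
  also have "\<dots> = tail_lq N (2*r) j0 z * tail_lq N (2*r') js u"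
    using tA tI unfolding topP_def tail_lq_def by simp
  finally show "sqrt (\<Sum>i\<in>R. (z i * u i)^2) \<le> tail_lq N (2*r) j0 z * tail_lq N (2*r') js u" .
qed



lemma two_pow_le_exp: "(2::real)^n \<le> exp (real n)"
proof -
  have "2 \<le> exp (1::real)" using exp_ge_add_one_self[of 1] by simp
  hence "(2::real)^n \<le> exp 1 ^ n" by (rule power_mono) simp
  also have "\<dots> = exp (real n)" using exp_of_nat_mult[of n "1::real"] by simp
  finally show ?thesis .
qed

lemma t_sq: "t \<ge> 4 \<Longrightarrow> (16::real) \<le> t^2"
proof -
  assume t: "t \<ge> 4"
  have "(4::real) * 4 \<le> t * t" by (rule mult_mono) (use t in auto)
  thus ?thesis by (simp add: power2_eq_square)
qed

lemma count_bound:
  fixes t m :: real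
  assumes t: "t \<ge> 4" and m: "m \<le> (2::real)^(3*2^s)" "0 \<le> m"
  shows "m * (2 * exp (- (t^2 * 2^s / 2))) \<le> 2 * exp (- (t^2 * 2^s / 4))"
proof -
  define X where "X = (2::real)^s"
  have X1: "X \<ge> 1" unfolding X_def by simp
  have t2: "t^2 \<ge> 16" using t_sq[OF t] .
  have "m \<le> exp (real (3*2^s))" using m(1) two_pow_le_exp[of "3*2^s"] by linarith
  hence mX: "m \<le> exp (3 * X)" unfolding X_def by simp
  have "12 * X \<le> t^2 * X" by (rule mult_right_mono) (use t2 X1 in auto)
  hence key: "3 * X + - (t^2 * X / 2) \<le> - (t^2 * X / 4)" by linarith
  have "m * (2 * exp (- (t^2 * X / 2))) \<le> exp (3 * X) * (2 * exp (- (t^2 * X / 2)))"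
    by (rule mult_right_mono[OF mX]) simp
  also have "\<dots> = 2 * exp (3 * X + - (t^2 * X / 2))" by (simp add: mult_exp_exp)
  also have "\<dots> \<le> 2 * exp (- (t^2 * X / 4))" using key by simp
  finally show ?thesis unfolding X_def .
qed

lemma level_bound:
  fixes t :: real
  assumes t: "t \<ge> 4"
  shows "2 * exp (- (t^2 * 2^(s0+k) / 4)) \<le> 2 * exp (- (t^2 * 2^s0 / 4)) * (1/2)^k"
proof -
  define a where "a = t^2 * 2^s0 / 4"
  have "(16::real) * 1 \<le> t^2 * 2^s0" by (rule mult_mono) (use t_sq[OF t] in auto)
  hence a4: "a \<ge> 4" unfolding a_def by simp
  have "Suc k \<le> 2^k" using less_exp[of k] by (simp only: Suc_le_eq)
  hence "real (Suc k) \<le> real (2^k)" by (simp only: of_nat_le_iff)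
  hence k1: "real k + 1 \<le> 2^k" by simp
  have "4 * (2^k - 1) \<le> a * (2^k - 1)" by (rule mult_right_mono) (use a4 k1 in auto)
  hence "4 * 2^k - 4 \<le> a * 2^k - a" by (simp only: right_diff_distrib mult_1_right)
  hence ak: "a + real k \<le> a * 2^k" using k1 by linarith
  have eq: "t^2 * 2^(s0+k) / 4 = a * 2^k" unfolding a_def by (simp add: power_add)
  have "exp (- real k) = exp (-1) ^ k" using exp_of_nat_mult[of k "-1"] by simp
  also have "\<dots> \<le> (1/2)^k"
  proof (rule power_mono)
    have "2 \<le> exp (1::real)" using exp_ge_add_one_self[of 1] by simp
    have "exp (-1::real) = 1 / exp 1" by (simp add: exp_minus inverse_eq_divide)
    also have "\<dots> \<le> 1 / 2" by (rule divide_left_mono) (use \<open>2 \<le> exp 1\<close> in auto)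
    finally show "exp (-1) \<le> (1/2::real)" .
  qed simp
  finally have ek: "exp (- real k) \<le> (1/2)^k" .
  have "exp (- (a * 2^k)) \<le> exp (- a + - real k)" using ak by simp
  also have "\<dots> = exp (- a) * exp (- real k)" by (simp add: mult_exp_exp)
  also have "\<dots> \<le> exp (- a) * (1/2)^k" by (rule mult_left_mono[OF ek]) simp
  finally show ?thesis unfolding eq a_def[symmetric] by simp
qed

lemma final_arith:
  fixes a :: real
  assumes "a \<ge> 4"
  shows "2 * exp (- a) + 4 * exp (- a) \<le> 2 * exp (- (a / 2))"
proof -
  have "3 \<le> exp (a/2)" using exp_ge_add_one_self[of "a/2"] assms by linarith
  hence "3 * exp (- (a/2)) \<le> exp (a/2) * exp (- (a/2))" by (rule mult_right_mono) simp
  hence "3 * exp (- (a/2)) \<le> 1" by (simp flip: exp_add)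
  hence "(3 * exp (- (a/2))) * (2 * exp (- (a/2))) \<le> 1 * (2 * exp (- (a/2)))"
    by (rule mult_right_mono) simp
  hence "6 * exp (- (a/2)) * exp (- (a/2)) \<le> 2 * exp (- (a/2))" by simp
  moreover have "exp (- a) = exp (- (a/2)) * exp (- (a/2))" by (simp flip: exp_add)
  ultimately show ?thesis by simp
qed

lemma series_bound:
  fixes X c :: "nat \<Rightarrow> real"
  assumes S: "X sums S" and c: "\<And>k. \<bar>X k\<bar> \<le> c k"
  shows "ereal \<bar>S\<bar> \<le> (\<Sum>k. ereal (c k))"
proof -
  have cnn: "0 \<le> ereal (c k)" for k
  proof -
    have "0 \<le> c k" using c[of k] abs_ge_zero[of "X k"] by linarith
    thus ?thesis by simp
  qed
  have bnd: "ereal \<bar>\<Sum>k<n. X k\<bar> \<le> (\<Sum>k. ereal (c k))" for n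
  proof -
    have "\<bar>\<Sum>k<n. X k\<bar> \<le> (\<Sum>k<n. c k)" by (intro order_trans[OF sum_abs] sum_mono c)
    hence "ereal \<bar>\<Sum>k<n. X k\<bar> \<le> (\<Sum>k<n. ereal (c k))" by simp
    also have "\<dots> \<le> (\<Sum>k. ereal (c k))" by (rule suminf_upper) (rule cnn)
    finally show ?thesis .
  qed
  have "(\<lambda>n. \<Sum>k<n. X k) \<longlonglongrightarrow> S" using S by (simp add: sums_def)
  hence "(\<lambda>n. ereal \<bar>\<Sum>k<n. X k\<bar>) \<longlonglongrightarrow> ereal \<bar>S\<bar>" by (intro tendsto_ereal tendsto_rabs)
  thus ?thesis by (rule LIMSEQ_le_const2) (use bnd in auto)
qed

lemma seminorm_nonneg:
  assumes f: "is_seminorm N f" and x: "x \<in> RN N"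
  shows "0 \<le> f x"
proof -
  have mx: "(\<lambda>i. (-1) * x i) \<in> RN N" using x by (simp add: RN_def)
  have tr: "\<forall>x\<in>RN N. \<forall>y\<in>RN N. f (\<lambda>i. x i + y i) \<le> f x + f y"
    using f unfolding is_seminorm_def by blast
  have tri: "f (\<lambda>i. x i + (-1) * x i) \<le> f x + f (\<lambda>i. (-1) * x i)"
    using tr[rule_format, OF x mx] by simp
  have neg: "f (\<lambda>i. (-1) * x i) = \<bar>-1\<bar> * f x" using f x unfolding is_seminorm_def by blast
  have z: "f (\<lambda>i. 0 * x i) = \<bar>0\<bar> * f x" using f x unfolding is_seminorm_def by blast
  have "(\<lambda>i. x i + (-1) * x i) = (\<lambda>i. 0 * x i)" by simp
  hence "f (\<lambda>i. 0 * x i) \<le> f x + f x" using tri neg by simp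
  thus ?thesis using z by simp
qed

lemma sum_restrict:
  fixes N :: nat and g :: "nat \<Rightarrow> real"
  shows "R \<subseteq> {1..N} \<Longrightarrow> (\<Sum>i\<in>{1..N}. (if i \<in> R then g i else 0)) = (\<Sum>i\<in>R. g i)"
proof -
  assume R: "R \<subseteq> {1..N}"
  have "{1..N} \<inter> R = R" using R by blast
  moreover have "sum g ({1..N} \<inter> R) = (\<Sum>x\<in>{1..N}. if x \<in> R then g x else 0)"
    by (rule sum.inter_restrict) simp
  ultimately show ?thesis by simp
qed



lemma main_lemma:
  fixes N :: nat and r r' :: real and z :: "nat \<Rightarrow> real" and V :: "(nat \<Rightarrow> real) set" and s0 :: nat
    and Vs :: "nat \<Rightarrow> (nat \<Rightarrow> real) set" and \<pi> :: "nat \<Rightarrow> (nat \<Rightarrow> real) \<Rightarrow> (nat \<Rightarrow> real)"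
    and nrm :: "nat \<Rightarrow> (nat \<Rightarrow> real) \<Rightarrow> real" and nrm0 :: "(nat \<Rightarrow> real) \<Rightarrow> real" and j :: "nat \<Rightarrow> nat" and t :: real
  assumes r1: "r > 1" and r'1: "r' > 1" and rr: "1 / r + 1 / r' = 1"
    and SA: "structA N r' V s0 Vs \<pi> nrm nrm0 j" and t4: "t \<ge> 4"
  shows "measure (rademacher N)
         {e \<in> signs N. \<forall>v\<in>V.
            ereal \<bar>\<Sum>i\<in>{1..N}. e i * z i * v i\<bar>
              \<le> ereal (2 * l2norm N z) * LambdaV V s0 \<pi> nrm
                + ereal t * ThetaV V s0 \<pi> nrm0
                  * ereal (real N powr (1 / (2 * r')) * tail_lq N (2 * r) (j s0) z)}
       \<ge> 1 - 2 * exp (- (1/8) * t^2 * 2 ^ s0)"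
proof -
  have VR: "V \<subseteq> RN N" using SA unfolding structA_def by blast
  have adm: "admissible V Vs" using SA unfolding structA_def by blast
  have piV: "\<forall>s. \<forall>v\<in>V. \<pi> s v \<in> Vs s" using SA unfolding structA_def by blast
  have ser: "\<forall>v\<in>V. \<forall>i. (\<lambda>k. Delta \<pi> (s0 + k) v i) sums (v i - \<pi> s0 v i)"
    using SA unfolding structA_def by blast
  have semi: "\<forall>s\<ge>s0. is_seminorm N (nrm s)" using SA unfolding structA_def by blast
  have semi0: "is_seminorm N nrm0" using SA unfolding structA_def by blast
  have jmono: "\<forall>s\<ge>s0. \<forall>s'\<ge>s. j s \<le> j s'" using SA unfolding structA_def by blast
  have jb: "\<forall>s\<ge>s0. 1 \<le> j s \<and> j s \<le> N + 1" using SA unfolding structA_def by blast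
  have hyp: "\<forall>s\<ge>s0. \<forall>v\<in>V.
        head_l2 N (j s) (Delta \<pi> s v) \<le> nrm s (Delta \<pi> s v) \<and>
        tail_lq N (2 * r') (j s) (Delta \<pi> s v) \<le> nrm0 (Delta \<pi> s v) * real N powr (1 / (2 * r')) \<and>
        head_l2 N (j s) (\<pi> s v) \<le> nrm s (\<pi> s v) \<and>
        tail_lq N (2 * r') (j s) (\<pi> s v) \<le> nrm0 (\<pi> s v) * real N powr (1 / (2 * r'))"
    using SA unfolding structA_def by blast
  have VsV: "Vs s \<subseteq> V" "finite (Vs s)" "card (Vs s) \<le> 2^(2^s)" for s
    using adm unfolding admissible_def by auto
  have piR: "\<pi> s v \<in> RN N" if "v \<in> V" for s v using piV VsV(1) VR that by blast
  have DR: "Delta \<pi> s v \<in> RN N" if "v \<in> V" for s v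
    using piR[OF that, of s] piR[OF that, of "Suc s"] unfolding RN_def Delta_def by auto

  define tz where "tz = tail_lq N (2*r) (j s0) z"
  define Np where "Np = real N powr (1 / (2 * r'))"
  define Z where "Z = 2 * l2norm N z"
  define W where "W = t * (Np * tz)"
  define Rs where "Rs = (\<lambda>s u. {1..N} - topset N (j s) u - topset N (j s0) z)"
  define av where "av = (\<lambda>s u i. if i \<in> Rs s u then z i * u i else 0)"
  define y where "y = (\<lambda>s::nat. t * 2 powr (real s / 2))"
  define bad where "bad = (\<lambda>s u. {e\<in>signs N. y s * sqrt (\<Sum>i\<in>{1..N}. (av s u i)^2) < \<bar>\<Sum>i\<in>{1..N}. e i * av s u i\<bar>})"

  have tznn: "tz \<ge> 0" unfolding tz_def tail_lq_def by simp
  have Npnn: "Np \<ge> 0" unfolding Np_def by simp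
  have Znn: "Z \<ge> 0" unfolding Z_def l2norm_def by (simp add: sum_nonneg)
  have Wnn: "W \<ge> 0" unfolding W_def using t4 tznn Npnn by simp
  have ynn: "y s \<ge> 0" for s unfolding y_def using t4 by simp
  have ysq: "(y s)^2 = t^2 * 2^s" for s
  proof -
    have "(2 powr (real s / 2))^2 = (2::real) powr (real s / 2 + real s / 2)"
      by (simp add: power2_eq_square flip: powr_add)
    also have "\<dots> = 2^s" by (simp add: powr_realpow)
    finally show ?thesis unfolding y_def by (simp add: power_mult_distrib)
  qed
  have Rsub: "Rs s u \<subseteq> {1..N}" for s u unfolding Rs_def by auto
  have prob_bad: "measure (rademacher N) (bad s u) \<le> 2 * exp (- (t^2 * 2^s / 2))" for s u
    using tail_prob[OF ynn[of s], where N=N and a="av s u"] by (simp add: bad_def ysq)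

  have piece: "\<bar>\<Sum>i\<in>{1..N}. e i * z i * u i\<bar> \<le> Z * nrm s u + W * (2 powr (real s / 2) * nrm0 u)"
    if e: "e \<in> signs N" and s: "s \<ge> s0" and nb: "e \<notin> bad s u"
      and hd: "head_l2 N (j s) u \<le> nrm s u" and tl: "tail_lq N (2 * r') (j s) u \<le> nrm0 u * Np"
    for e s u
  proof -
    have j0: "1 \<le> j s0" "j s0 \<le> j s" "j s \<le> N + 1" using jb jmono s by auto
    note pd = piece_det[OF e j0 r1 r'1 rr, where u=u and z=z]
    have Req: "Rs s u = {1..N} - topset N (j s) u - topset N (j s0) z" unfolding Rs_def ..
    have sa1: "(\<Sum>i\<in>{1..N}. e i * av s u i) = (\<Sum>i\<in>Rs s u. e i * z i * u i)"
    proof -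
      have "(\<Sum>i\<in>{1..N}. e i * av s u i) = (\<Sum>i\<in>{1..N}. if i \<in> Rs s u then e i * z i * u i else 0)"
        unfolding av_def by (rule sum.cong) auto
      also have "\<dots> = (\<Sum>i\<in>Rs s u. e i * z i * u i)" by (rule sum_restrict[OF Rsub])
      finally show ?thesis .
    qed
    have sa2: "(\<Sum>i\<in>{1..N}. (av s u i)^2) = (\<Sum>i\<in>Rs s u. (z i * u i)^2)"
    proof -
      have "(\<Sum>i\<in>{1..N}. (av s u i)^2) = (\<Sum>i\<in>{1..N}. if i \<in> Rs s u then (z i * u i)^2 else 0)"
        unfolding av_def by (rule sum.cong) auto
      also have "\<dots> = (\<Sum>i\<in>Rs s u. (z i * u i)^2)" by (rule sum_restrict[OF Rsub])
      finally show ?thesis .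
    qed
    have rnd: "\<bar>\<Sum>i\<in>Rs s u. e i * z i * u i\<bar> \<le> y s * sqrt (\<Sum>i\<in>Rs s u. (z i * u i)^2)"
    proof -
      have "\<not> (y s * sqrt (\<Sum>i\<in>{1..N}. (av s u i)^2) < \<bar>\<Sum>i\<in>{1..N}. e i * av s u i\<bar>)"
        using nb e unfolding bad_def by blast
      thus ?thesis by (simp only: sa1 sa2 not_less)
    qed
    have A1: "2 * l2norm N z * head_l2 N (j s) u \<le> Z * nrm s u"
      unfolding Z_def mult.assoc by (rule mult_left_mono[OF mult_left_mono[OF hd]]) (simp_all add: l2norm_def sum_nonneg)
    have A2: "sqrt (\<Sum>i\<in>Rs s u. (z i * u i)^2) \<le> tz * (nrm0 u * Np)"
    proof -
      have "sqrt (\<Sum>i\<in>Rs s u. (z i * u i)^2) \<le> tz * tail_lq N (2*r') (j s) u"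
        using pd(2) unfolding Req tz_def .
      also have "\<dots> \<le> tz * (nrm0 u * Np)" by (rule mult_left_mono[OF tl tznn])
      finally show ?thesis .
    qed
    have A3: "y s * sqrt (\<Sum>i\<in>Rs s u. (z i * u i)^2) \<le> y s * (tz * (nrm0 u * Np))"
      by (rule mult_left_mono[OF A2 ynn])
    have "\<bar>\<Sum>i\<in>{1..N}. e i * z i * u i\<bar> \<le> 2 * l2norm N z * head_l2 N (j s) u + \<bar>\<Sum>i\<in>Rs s u. e i * z i * u i\<bar>"
      using pd(1) unfolding Req .
    also have "\<dots> \<le> Z * nrm s u + y s * (tz * (nrm0 u * Np))" using A1 rnd A3 by linarith
    also have "\<dots> = Z * nrm s u + W * (2 powr (real s / 2) * nrm0 u)" unfolding y_def W_def by (simp add: mult_ac)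
    finally show ?thesis .
  qed

  define P where "P = (\<lambda>v. \<pi> s0 v) ` V"
  define D where "D = (\<lambda>s. (\<lambda>v. Delta \<pi> s v) ` V)"
  have Psub: "P \<subseteq> Vs s0" unfolding P_def using piV by auto
  have finP: "finite P" using Psub VsV(2) finite_subset by blast
  have cardP: "real (card P) \<le> 2^(3*2^s0)"
  proof -
    have "card P \<le> card (Vs s0)" by (rule card_mono[OF VsV(2) Psub])
    also have "\<dots> \<le> 2^(2^s0)" by (rule VsV(3))
    also have "\<dots> \<le> 2^(3*2^s0)" by (rule power_increasing) auto
    finally have "card P \<le> 2^(3*2^s0)" .
    hence "real (card P) \<le> real (2^(3*2^s0))" by (simp only: of_nat_le_iff)
    thus ?thesis by simp
  qed
  have Dsub: "D s \<subseteq> (\<lambda>(a,b). \<lambda>i. b i - a i) ` (Vs s \<times> Vs (Suc s))" for s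
  proof
    fix w assume "w \<in> D s"
    then obtain v where v: "v \<in> V" "w = Delta \<pi> s v" unfolding D_def by auto
    have "w = (\<lambda>(a,b). \<lambda>i. b i - a i) (\<pi> s v, \<pi> (Suc s) v)" unfolding v Delta_def by simp
    moreover have "(\<pi> s v, \<pi> (Suc s) v) \<in> Vs s \<times> Vs (Suc s)" using piV v by auto
    ultimately show "w \<in> (\<lambda>(a,b). \<lambda>i. b i - a i) ` (Vs s \<times> Vs (Suc s))" by (rule image_eqI)
  qed
  have finD: "finite (D s)" for s
    using Dsub[of s] VsV(2)[of s] VsV(2)[of "Suc s"] finite_subset by blast
  have cardD: "real (card (D s)) \<le> 2^(3*2^s)" for s
  proof -
    have "card (D s) \<le> card ((\<lambda>(a,b). \<lambda>i. b i - a i) ` (Vs s \<times> Vs (Suc s)))"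
      by (rule card_mono[OF _ Dsub]) (simp add: VsV(2))
    also have "\<dots> \<le> card (Vs s \<times> Vs (Suc s))" by (rule card_image_le) (simp add: VsV(2))
    also have "\<dots> = card (Vs s) * card (Vs (Suc s))" by (rule card_cartesian_product)
    also have "\<dots> \<le> 2^(2^s) * 2^(2^Suc s)" by (intro mult_le_mono VsV(3))
    also have "\<dots> = 2^(3*2^s)" by (simp flip: power_add)
    finally have "card (D s) \<le> 2^(3*2^s)" .
    hence "real (card (D s)) \<le> real (2^(3*2^s))" by (simp only: of_nat_le_iff)
    thus ?thesis by simp
  qed

  have sets: "A \<in> sets (rademacher N)" for A unfolding rademacher_def by simp
  define BadP where "BadP = (\<Union>u\<in>P. bad s0 u)"
  define BadD where "BadD = (\<lambda>k. \<Union>u\<in>D (s0+k). bad (s0+k) u)"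
  define a where "a = t^2 * 2^s0 / 4"
  have "(16::real) * 1 \<le> t^2 * 2^s0" by (rule mult_mono) (use t_sq[OF t4] in auto)
  hence a4: "a \<ge> 4" unfolding a_def by simp
  have mP: "measure (rademacher N) BadP \<le> 2 * exp (- a)"
  proof -
    have "measure (rademacher N) BadP \<le> (\<Sum>u\<in>P. measure (rademacher N) (bad s0 u))"
      unfolding BadP_def by (rule measure_UNION_le[OF finP]) (simp add: sets)
    also have "\<dots> \<le> (\<Sum>u\<in>P. 2 * exp (- (t^2 * 2^s0 / 2)))" by (rule sum_mono) (rule prob_bad)
    also have "\<dots> = real (card P) * (2 * exp (- (t^2 * 2^s0 / 2)))" by simp
    also have "\<dots> \<le> 2 * exp (- (t^2 * 2^s0 / 4))" by (rule count_bound[OF t4 cardP]) simp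
    finally show ?thesis unfolding a_def .
  qed
  have mD: "measure (rademacher N) (BadD k) \<le> 2 * exp (- a) * (1/2)^k" for k
  proof -
    have "measure (rademacher N) (BadD k) \<le> (\<Sum>u\<in>D (s0+k). measure (rademacher N) (bad (s0+k) u))"
      unfolding BadD_def by (rule measure_UNION_le[OF finD]) (simp add: sets)
    also have "\<dots> \<le> (\<Sum>u\<in>D (s0+k). 2 * exp (- (t^2 * 2^(s0+k) / 2)))" by (rule sum_mono) (rule prob_bad)
    also have "\<dots> = real (card (D (s0+k))) * (2 * exp (- (t^2 * 2^(s0+k) / 2)))" by simp
    also have "\<dots> \<le> 2 * exp (- (t^2 * 2^(s0+k) / 4))" by (rule count_bound[OF t4 cardD]) simp
    also have "\<dots> \<le> 2 * exp (- (t^2 * 2^s0 / 4)) * (1/2)^k" by (rule level_bound[OF t4])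
    finally show ?thesis unfolding a_def .
  qed
  have sumg: "summable (\<lambda>k. 2 * exp (- a) * (1/2::real)^k)"
    by (intro summable_mult summable_geometric) simp
  have summD: "summable (\<lambda>k. measure (rademacher N) (BadD k))"
    by (rule summable_comparison_test'[OF sumg]) (simp add: mD)
  have mU: "measure (rademacher N) (\<Union>k. BadD k) \<le> 4 * exp (- a)"
  proof -
    have "measure (rademacher N) (\<Union>k. BadD k) \<le> (\<Sum>k. measure (rademacher N) (BadD k))"
      using summD unfolding rademacher_def
      by (intro measure_pmf.finite_measure_subadditive_countably) auto
    also have "\<dots> \<le> (\<Sum>k. 2 * exp (- a) * (1/2::real)^k)" by (rule suminf_le[OF mD summD sumg])
    also have "\<dots> = 2 * exp (- a) * 2"
      using suminf_mult[OF summable_geometric[of "1/2::real"], of "2 * exp (- a)"]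
        suminf_geometric[of "1/2::real"] by simp
    finally show ?thesis by simp
  qed

  define E where "E = {e \<in> signs N. \<forall>v\<in>V.
            ereal \<bar>\<Sum>i\<in>{1..N}. e i * z i * v i\<bar>
              \<le> ereal (2 * l2norm N z) * LambdaV V s0 \<pi> nrm
                + ereal t * ThetaV V s0 \<pi> nrm0
                  * ereal (real N powr (1 / (2 * r')) * tail_lq N (2 * r) (j s0) z)}"
  have cover: "signs N \<subseteq> E \<union> (BadP \<union> (\<Union>k. BadD k))"
  proof
    fix e assume e: "e \<in> signs N"
    show "e \<in> E \<union> (BadP \<union> (\<Union>k. BadD k))"
    proof (cases "e \<in> BadP \<union> (\<Union>k. BadD k)")
      case True thus ?thesis by blast
    next
      case False
      hence nP: "e \<notin> bad s0 u" if "u \<in> P" for u using that unfolding BadP_def by blast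
      have nD: "e \<notin> bad (s0+k) u" if "u \<in> D (s0+k)" for k u using False that unfolding BadD_def by blast
      have "\<forall>v\<in>V. ereal \<bar>\<Sum>i\<in>{1..N}. e i * z i * v i\<bar>
              \<le> ereal (2 * l2norm N z) * LambdaV V s0 \<pi> nrm
                + ereal t * ThetaV V s0 \<pi> nrm0
                  * ereal (real N powr (1 / (2 * r')) * tail_lq N (2 * r) (j s0) z)"
      proof
        fix v assume v: "v \<in> V"
        define X where "X = (\<lambda>k. \<Sum>i\<in>{1..N}. e i * z i * Delta \<pi> (s0+k) v i)"
        define Xp where "Xp = (\<Sum>i\<in>{1..N}. e i * z i * \<pi> s0 v i)"
        define S' where "S' = (\<Sum>i\<in>{1..N}. e i * z i * (v i - \<pi> s0 v i))"
        have Xs: "X sums S'"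
          unfolding X_def S'_def
          by (rule sums_sum, rule sums_mult) (use ser v in blast)
        have Ssplit: "(\<Sum>i\<in>{1..N}. e i * z i * v i) = Xp + S'"
          unfolding Xp_def S'_def by (simp add: sum.distrib[symmetric] algebra_simps)
        define ak where "ak = (\<lambda>k. nrm (s0 + k) (Delta \<pi> (s0 + k) v))"
        define bk where "bk = (\<lambda>k. 2 powr (real (s0 + k) / 2) * nrm0 (Delta \<pi> (s0 + k) v))"
        define ap where "ap = nrm s0 (\<pi> s0 v)"
        define bp where "bp = 2 powr (real s0 / 2) * nrm0 (\<pi> s0 v)"
        have aknn: "ak k \<ge> 0" for k unfolding ak_def
          using semi DR[OF v] by (intro seminorm_nonneg) auto
        have bknn: "bk k \<ge> 0" for k unfolding bk_def
          using seminorm_nonneg[OF semi0 DR[OF v]] by simp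
        have apnn: "ap \<ge> 0" unfolding ap_def
          using semi piR[OF v] by (intro seminorm_nonneg) auto
        have bpnn: "bp \<ge> 0" unfolding bp_def
          using seminorm_nonneg[OF semi0 piR[OF v]] by simp
        have Xb: "\<bar>X k\<bar> \<le> Z * ak k + W * bk k" for k
        proof -
          have h: "head_l2 N (j (s0+k)) (Delta \<pi> (s0+k) v) \<le> nrm (s0+k) (Delta \<pi> (s0+k) v)"
            "tail_lq N (2 * r') (j (s0+k)) (Delta \<pi> (s0+k) v) \<le> nrm0 (Delta \<pi> (s0+k) v) * Np"
            using hyp v unfolding Np_def by auto
          have "e \<notin> bad (s0+k) (Delta \<pi> (s0+k) v)" by (rule nD) (use v in \<open>auto simp: D_def\<close>)
          from piece[OF e _ this h] show ?thesis unfolding X_def ak_def bk_def by simp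
        qed
        have Xpb: "\<bar>Xp\<bar> \<le> Z * ap + W * bp"
        proof -
          have h: "head_l2 N (j s0) (\<pi> s0 v) \<le> nrm s0 (\<pi> s0 v)"
            "tail_lq N (2 * r') (j s0) (\<pi> s0 v) \<le> nrm0 (\<pi> s0 v) * Np"
            using hyp v unfolding Np_def by auto
          have "e \<notin> bad s0 (\<pi> s0 v)" by (rule nP) (use v in \<open>auto simp: P_def\<close>)
          from piece[OF e _ this h] show ?thesis unfolding Xp_def ap_def bp_def by simp
        qed
        have sA: "(\<Sum>k. ereal (Z * ak k + W * bk k)) = ereal Z * (\<Sum>k. ereal (ak k)) + ereal W * (\<Sum>k. ereal (bk k))"
        proof -
          have e1: "(\<Sum>k. ereal (Z * ak k + W * bk k)) = (\<Sum>k. ereal (Z * ak k)) + (\<Sum>k. ereal (W * bk k))"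
            using suminf_add_ereal[where f="\<lambda>k. ereal (Z * ak k)" and g="\<lambda>k. ereal (W * bk k)"]
              aknn bknn Znn Wnn by simp
          have e2: "(\<Sum>k. ereal (Z * ak k)) = ereal Z * (\<Sum>k. ereal (ak k))"
            using suminf_cmult_ereal[where f="\<lambda>k. ereal (ak k)" and a="ereal Z"] aknn Znn by simp
          have e3: "(\<Sum>k. ereal (W * bk k)) = ereal W * (\<Sum>k. ereal (bk k))"
            using suminf_cmult_ereal[where f="\<lambda>k. ereal (bk k)" and a="ereal W"] bknn Wnn by simp
          show ?thesis unfolding e1 e2 e3 ..
        qed
        have s1: "0 \<le> (\<Sum>k. ereal (ak k))" by (rule suminf_0_le) (simp add: aknn)
        have s2: "0 \<le> (\<Sum>k. ereal (bk k))" by (rule suminf_0_le) (simp add: bknn)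
        have "ereal \<bar>\<Sum>i\<in>{1..N}. e i * z i * v i\<bar> \<le> ereal \<bar>Xp\<bar> + ereal \<bar>S'\<bar>"
          unfolding Ssplit by (simp add: abs_triangle_ineq)
        also have "\<dots> \<le> ereal (Z * ap + W * bp) + (\<Sum>k. ereal (Z * ak k + W * bk k))"
          using Xpb series_bound[OF Xs Xb] by (intro add_mono) auto
        also have "\<dots> = ereal Z * ((\<Sum>k. ereal (ak k)) + ereal ap) + ereal W * ((\<Sum>k. ereal (bk k)) + ereal bp)"
        proof -
          have sp: "ereal (Z * ap + W * bp) = ereal (Z * ap) + ereal (W * bp)" by simp
          show ?thesis unfolding sA sp using s1 s2 apnn bpnn
            by (simp add: ereal_right_distrib ac_simps del: plus_ereal.simps)
        qed
        also have "\<dots> \<le> ereal Z * LambdaV V s0 \<pi> nrm + ereal W * ThetaV V s0 \<pi> nrm0"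
        proof (intro add_mono ereal_mult_left_mono)
          show "(\<Sum>k. ereal (ak k)) + ereal ap \<le> LambdaV V s0 \<pi> nrm"
            unfolding LambdaV_def ak_def ap_def by (rule SUP_upper) (rule v)
          show "(\<Sum>k. ereal (bk k)) + ereal bp \<le> ThetaV V s0 \<pi> nrm0"
            unfolding ThetaV_def bk_def bp_def by (rule SUP_upper) (rule v)
        qed (use Znn Wnn in auto)
        also have "\<dots> = ereal (2 * l2norm N z) * LambdaV V s0 \<pi> nrm
                + ereal t * ThetaV V s0 \<pi> nrm0
                  * ereal (real N powr (1 / (2 * r')) * tail_lq N (2 * r) (j s0) z)"
        proof -
          have "ereal W * ThetaV V s0 \<pi> nrm0 = ereal t * ThetaV V s0 \<pi> nrm0 * ereal (Np * tz)"
          proof -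
            have "ereal W = ereal t * ereal (Np * tz)" unfolding W_def by simp
            thus ?thesis by (simp only: mult.assoc mult.commute[of "ThetaV V s0 \<pi> nrm0"])
          qed
          thus ?thesis unfolding Z_def Np_def tz_def by simp
        qed
        finally show "ereal \<bar>\<Sum>i\<in>{1..N}. e i * z i * v i\<bar>
              \<le> ereal (2 * l2norm N z) * LambdaV V s0 \<pi> nrm
                + ereal t * ThetaV V s0 \<pi> nrm0
                  * ereal (real N powr (1 / (2 * r')) * tail_lq N (2 * r) (j s0) z)" .
      qed
      thus ?thesis unfolding E_def using e by blast
    qed
  qed
  have "1 = measure (rademacher N) (signs N)" by (simp add: measure_rademacher card_signs)
  also have "\<dots> \<le> measure (rademacher N) (E \<union> (BadP \<union> (\<Union>k. BadD k)))"
    unfolding rademacher_def by (rule measure_pmf.finite_measure_mono[OF cover]) simp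
  also have "\<dots> \<le> measure (rademacher N) E + measure (rademacher N) (BadP \<union> (\<Union>k. BadD k))"
    by (rule measure_Un_le) (simp_all add: sets)
  also have "\<dots> \<le> measure (rademacher N) E + (measure (rademacher N) BadP + measure (rademacher N) (\<Union>k. BadD k))"
    by (rule add_left_mono, rule measure_Un_le) (simp_all add: sets)
  finally have "1 \<le> measure (rademacher N) E + (2 * exp (- a) + 4 * exp (- a))" using mP mU by linarith
  moreover have "2 * exp (- a) + 4 * exp (- a) \<le> 2 * exp (- (a / 2))" by (rule final_arith[OF a4])
  moreover have "exp (- (1/8) * t^2 * 2 ^ s0) = exp (- (a / 2))" unfolding a_def by simp
  ultimately show ?thesis unfolding E_def[symmetric] by linarith
qed


theorem mainTheorem5:
  shows "\<exists>c::real. c > 0 \<and>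
    (\<forall>(N::nat) (r::real) (r'::real) (z::nat \<Rightarrow> real) (V::(nat \<Rightarrow> real) set) (s0::nat)
       (Vs::nat \<Rightarrow> (nat \<Rightarrow> real) set) (\<pi>::nat \<Rightarrow> (nat \<Rightarrow> real) \<Rightarrow> (nat \<Rightarrow> real))
       (nrm::nat \<Rightarrow> (nat \<Rightarrow> real) \<Rightarrow> real) (nrm0::(nat \<Rightarrow> real) \<Rightarrow> real) (j::nat \<Rightarrow> nat) (t::real).
       r > 1 \<and> r' > 1 \<and> 1 / r + 1 / r' = 1 \<and> z \<in> RN N \<and>
       structA N r' V s0 Vs \<pi> nrm nrm0 j \<and> t \<ge> 4 \<longrightarrow>
       measure (rademacher N)
         {e \<in> signs N. \<forall>v\<in>V.
            ereal \<bar>\<Sum>i\<in>{1..N}. e i * z i * v i\<bar>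
              \<le> ereal (2 * l2norm N z) * LambdaV V s0 \<pi> nrm
                + ereal t * ThetaV V s0 \<pi> nrm0
                  * ereal (real N powr (1 / (2 * r')) * tail_lq N (2 * r) (j s0) z)}
       \<ge> 1 - 2 * exp (- c * t^2 * 2 ^ s0))"
  apply (rule exI[of _ "1/8"])
  apply (intro conjI allI impI)
   apply simp
  apply (elim conjE)
  apply (rule main_lemma; assumption)
  done

end
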